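(* In the setting of pair comparisons (every $S_t$ has cardinality $2$, fixed), with true parameter $\theta^\star\in[-b,b]^n$, assume there is $B>0$ with $\left|\frac{d}{dx}\log p_2(x)\right|\le B$ for all $x\in[-2b,2b]$. Then with probability at least $1-2/n$ over the choices, $$\|\nabla(-\ell(\theta^\star))\|_2\le 2B\sqrt{m(\log n+2)}.$$
   Context: Items $N=\{1,\dots,n\}$; observations $(S_t,y_t)$, $t=1,\dots,m$, with $S_t=\{y_t,z_t\}$ and $y_t$ the chosen item. $F$ is a CDF of a zero-mean random variable with density $f$ (so $p_2'$ is even), $p_2(x)=\int_{\mathbb R}F(x+z)f(z)\,dz$. Given the comparison sets, choices are independent with $y_t=i$ with probability $p_2(\theta^\star_i-\theta^\star_j)$ when $S_t=\{i,j\}$. Log-likelihood $\ell(\theta)=\sum_{t=1}^m\log p_2(\theta_{y_t}-\theta_{z_t})$. *)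

theory Defs
  imports "HOL-Probability.Probability"
begin

definition zero_mean_density :: "(real \<Rightarrow> real) \<Rightarrow> bool" where
  "zero_mean_density f \<longleftrightarrow>
     f \<in> borel_measurable borel \<and> (\<forall>x. 0 \<le> f x) \<and>
     integrable lborel f \<and> (LINT z|lborel. f z) = 1 \<and>
     integrable lborel (\<lambda>z. z * f z) \<and> (LINT z|lborel. z * f z) = 0"

definition cdf_of_density :: "(real \<Rightarrow> real) \<Rightarrow> (real \<Rightarrow> real) \<Rightarrow> bool" where
  "cdf_of_density F f \<longleftrightarrow> (\<forall>x. F x = (LINT z:{..x}|lborel. f z))"

definition p2 :: "(real \<Rightarrow> real) \<Rightarrow> (real \<Rightarrow> real) \<Rightarrow> real \<Rightarrow> real" where
  "p2 F f x = (LINT z|lborel. F (x + z) * f z)"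

text \<open>Log-likelihood for chosen items y t and non-chosen items z t, t = 1..m.\<close>
definition loglik :: "(real \<Rightarrow> real) \<Rightarrow> (real \<Rightarrow> real) \<Rightarrow> nat \<Rightarrow> (nat \<Rightarrow> nat) \<Rightarrow> (nat \<Rightarrow> nat)
    \<Rightarrow> (nat \<Rightarrow> real) \<Rightarrow> real" where
  "loglik F f m y z \<theta> = (\<Sum>t\<in>{1..m}. ln (p2 F f (\<theta> (y t) - \<theta> (z t))))"

definition neg_loglik_grad :: "(real \<Rightarrow> real) \<Rightarrow> (real \<Rightarrow> real) \<Rightarrow> nat \<Rightarrow> (nat \<Rightarrow> nat) \<Rightarrow> (nat \<Rightarrow> nat)
    \<Rightarrow> (nat \<Rightarrow> real) \<Rightarrow> nat \<Rightarrow> real" where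
  "neg_loglik_grad F f m y z \<theta> k = deriv (\<lambda>s. - loglik F f m y z (\<theta>(k := s))) (\<theta> k)"

definition neg_loglik_grad_norm :: "nat \<Rightarrow> (real \<Rightarrow> real) \<Rightarrow> (real \<Rightarrow> real) \<Rightarrow> nat \<Rightarrow> (nat \<Rightarrow> nat)
    \<Rightarrow> (nat \<Rightarrow> nat) \<Rightarrow> (nat \<Rightarrow> real) \<Rightarrow> real" where
  "neg_loglik_grad_norm n F f m y z \<theta> = sqrt (\<Sum>k\<in>{1..n}. (neg_loglik_grad F f m y z \<theta> k)\<^sup>2)"

text \<open>Comparison t is the pair {i t, j t}; omega t = True means item i t was chosen.
  The choices are independent with P(i t chosen) = p2(theta(i t) - theta(j t)).\<close>
definition choice_pmf :: "(real \<Rightarrow> real) \<Rightarrow> (real \<Rightarrow> real) \<Rightarrow> (nat \<Rightarrow> real) \<Rightarrow> (nat \<Rightarrow> nat)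
    \<Rightarrow> (nat \<Rightarrow> nat) \<Rightarrow> nat \<Rightarrow> (nat \<Rightarrow> bool) pmf" where
  "choice_pmf F f \<theta> i j m =
     Pi_pmf {1..m} False (\<lambda>t. bernoulli_pmf (p2 F f (\<theta> (i t) - \<theta> (j t))))"

definition chosen :: "(nat \<Rightarrow> nat) \<Rightarrow> (nat \<Rightarrow> nat) \<Rightarrow> (nat \<Rightarrow> bool) \<Rightarrow> nat \<Rightarrow> nat" where
  "chosen i j \<omega> t = (if \<omega> t then i t else j t)"

definition other :: "(nat \<Rightarrow> nat) \<Rightarrow> (nat \<Rightarrow> nat) \<Rightarrow> (nat \<Rightarrow> bool) \<Rightarrow> nat \<Rightarrow> nat" where
  "other i j \<omega> t = (if \<omega> t then j t else i t)"

end

theory Submission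
  imports Defs
begin

lemma sinh_le_x_cosh:
  fixes y :: real assumes "0 \<le> y" shows "sinh y \<le> y * cosh y"
proof -
  have "(\<lambda>y. y * cosh y - sinh y) 0 \<le> (\<lambda>y. y * cosh y - sinh y) y"
  proof (rule DERIV_nonneg_imp_nondecreasing[OF assms])
    fix x :: real assume "0 \<le> x" "x \<le> y"
    have "DERIV (\<lambda>y. y * cosh y - sinh y) x :> (1 * cosh x + x * sinh x - cosh x)"
      by (auto intro!: derivative_eq_intros)
    moreover have "1 * cosh x + x * sinh x - cosh x \<ge> 0"
      using \<open>0 \<le> x\<close> by simp
    ultimately show "\<exists>d. DERIV (\<lambda>y. y * cosh y - sinh y) x :> d \<and> d \<ge> 0" by blast
  qed
  then show ?thesis by simp
qed

lemma ode_cmp: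
  fixes G G1 G2 :: "real \<Rightarrow> real" and k :: real
  assumes d1: "\<And>t. DERIV G t :> G1 t" and d2: "\<And>t. DERIV G1 t :> G2 t"
    and le: "\<And>t. G2 t \<le> k\<^sup>2 * G t" and z: "G1 0 = 0"
  shows "G 1 \<le> G 0 * cosh k"
proof -
  define H where "H t = G1 t * cosh (k*t) - k * G t * sinh (k*t)" for t
  have dH: "DERIV H t :> (G2 t - k\<^sup>2 * G t) * cosh (k*t)" for t
    unfolding H_def
    by (rule derivative_eq_intros d1 d2 refl | simp)+ (simp add: algebra_simps power2_eq_square)
  have Hle: "H t \<le> 0" if "0 \<le> t" for t
  proof -
    have "H t \<le> H 0"
    proof (rule DERIV_nonpos_imp_nonincreasing[OF that])
      fix x assume "0 \<le> x" "x \<le> t"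
      have "(G2 x - k\<^sup>2 * G x) * cosh (k*x) \<le> 0"
        using le[of x] by (intro mult_nonpos_nonneg) auto
      then show "\<exists>y. DERIV H x :> y \<and> y \<le> 0" using dH by blast
    qed
    also have "H 0 = 0" by (simp add: H_def z)
    finally show ?thesis .
  qed
  define R where "R t = G t / cosh (k*t)" for t
  have dR: "DERIV R t :> H t / (cosh (k*t))\<^sup>2" for t
    unfolding R_def H_def
    apply (rule derivative_eq_intros d1 refl | simp)+
    apply (simp add: power2_eq_square field_simps)
    done
  have "R 1 \<le> R 0"
  proof (rule DERIV_nonpos_imp_nonincreasing[of 0 1])
    fix x :: real assume "0 \<le> x" "x \<le> 1"
    have "H x / (cosh (k*x))\<^sup>2 \<le> 0" using Hle[OF \<open>0\<le>x\<close>] by (simp add: divide_nonpos_pos)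
    then show "\<exists>y. DERIV R x :> y \<and> y \<le> 0" using dR by blast
  qed simp
  then show ?thesis by (simp add: R_def field_simps)
qed

lemma Q_pos:
  fixes a C W s :: real assumes "W > 0" "C\<^sup>2 < a * W"
  shows "a + 2 * C * s + W * s\<^sup>2 > 0"
proof -
  have "W * (a + 2 * C * s + W * s\<^sup>2) = (C + W * s)\<^sup>2 + (a * W - C\<^sup>2)"
    by (simp add: algebra_simps power2_eq_square)
  also have "\<dots> > 0" using assms by (smt (verit) zero_le_power2)
  finally show ?thesis using assms(1) by (simp add: zero_less_mult_iff)
qed

lemma psi_bound:
  fixes a C W lam :: real
  assumes W: "W > 0" and CS: "C\<^sup>2 < a * W" and lam: "lam \<ge> 0"
  defines "Q \<equiv> \<lambda>s. a + 2 * C * s + W * s\<^sup>2"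
  defines "\<psi> \<equiv> \<lambda>s. cosh (lam * sqrt (Q s))"
  defines "\<psi>1 \<equiv> \<lambda>s. lam * sinh (lam * sqrt (Q s)) * (C + W * s) / sqrt (Q s)"
  defines "\<psi>2 \<equiv> \<lambda>s. lam\<^sup>2 * cosh (lam * sqrt (Q s)) * (C + W * s)\<^sup>2 / Q s
                   + lam * sinh (lam * sqrt (Q s)) * (W * Q s - (C + W * s)\<^sup>2) / (Q s * sqrt (Q s))"
  shows "DERIV \<psi> s :> \<psi>1 s" "DERIV \<psi>1 s :> \<psi>2 s" "\<psi>2 s \<le> lam\<^sup>2 * W * \<psi> s"
proof -
  have Qp: "Q s > 0" for s unfolding Q_def by (rule Q_pos[OF W CS])
  have dQ: "DERIV Q s :> 2*(C + W * s)" for s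
    unfolding Q_def by (auto intro!: derivative_eq_intros simp: algebra_simps)
  define r where "r = (\<lambda>s. sqrt (Q s))"
  have rp: "r s > 0" for s using Qp[of s] by (simp add: r_def)
  have rne: "r s \<noteq> 0" for s using rp[of s] by simp
  have rQ: "Q s = (r s)\<^sup>2" for s using Qp[of s] by (simp add: r_def)
  have dr: "DERIV r s :> (C + W * s) / r s" for s
  proof -
    have "DERIV (\<lambda>s. sqrt (Q s)) s :> inverse (sqrt (Q s)) / 2 * (2*(C + W * s))"
      by (rule DERIV_chain2[OF DERIV_real_sqrt[OF Qp] dQ])
    moreover have "inverse (sqrt (Q s)) / 2 * (2*(C + W * s)) = (C + W * s) / sqrt (Q s)"
      using Qp[of s] by (simp add: field_simps)
    ultimately show ?thesis unfolding r_def by metis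
  qed
  have e1: "\<psi> = (\<lambda>s. cosh (lam * r s))" unfolding \<psi>_def r_def ..
  have e2: "\<psi>1 = (\<lambda>s. lam * sinh (lam * r s) * (C + W * s) / r s)" unfolding \<psi>1_def r_def ..
  have e3: "\<psi>2 s = lam\<^sup>2 * cosh (lam * r s) * (C + W * s)\<^sup>2 / (r s)\<^sup>2
                   + lam * sinh (lam * r s) * (W * (r s)\<^sup>2 - (C + W * s)\<^sup>2) / ((r s)\<^sup>2 * r s)"
    unfolding \<psi>2_def r_def using Qp[of s] by simp
  show "DERIV \<psi> s :> \<psi>1 s"
    unfolding e1 e2
    by (rule derivative_eq_intros dr refl | simp)+
  have "DERIV \<psi>1 s :> lam * (cosh (lam * r s) * (lam * ((C + W * s) / r s)) * (C + W * s) / r s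
           + sinh (lam * r s) * ((W * r s - (C + W * s) * ((C + W * s) / r s)) / (r s)\<^sup>2))"
    unfolding e2
    apply (rule derivative_eq_intros dr refl | simp)+
    apply (simp_all add: rne field_simps power2_eq_square)
    done
  moreover have "lam * (cosh (lam * r s) * (lam * ((C + W * s) / r s)) * (C + W * s) / r s
           + sinh (lam * r s) * ((W * r s - (C + W * s) * ((C + W * s) / r s)) / (r s)\<^sup>2)) = \<psi>2 s"
    unfolding e3 using rp[of s]
    by (simp add: field_simps power2_eq_square)
  ultimately show "DERIV \<psi>1 s :> \<psi>2 s" by metis
  have key: "W * Q s - (C + W * s)\<^sup>2 = a*W - C\<^sup>2"
    unfolding Q_def by (simp add: algebra_simps power2_eq_square)
  have pos: "W * Q s - (C + W * s)\<^sup>2 \<ge> 0" using key CS by simp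
  have sq: "sqrt (Q s) > 0" using Qp by simp
  have sc: "sinh (lam * sqrt (Q s)) \<le> lam * sqrt (Q s) * cosh (lam * sqrt (Q s))"
    by (rule sinh_le_x_cosh) (use lam sq in simp)
  have "lam * sinh (lam * sqrt (Q s)) * (W * Q s - (C + W * s)\<^sup>2) / (Q s * sqrt (Q s))
        = (lam * sinh (lam * sqrt (Q s)) / sqrt (Q s)) * ((W * Q s - (C + W * s)\<^sup>2) / Q s)"
    by simp
  also have "\<dots> \<le> (lam\<^sup>2 * cosh (lam * sqrt (Q s))) * ((W * Q s - (C + W * s)\<^sup>2) / Q s)"
  proof (rule mult_right_mono)
    show "lam * sinh (lam * sqrt (Q s)) / sqrt (Q s) \<le> lam\<^sup>2 * cosh (lam * sqrt (Q s))"
      using mult_left_mono[OF sc lam] sq by (simp add: divide_le_eq power2_eq_square algebra_simps)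
    show "0 \<le> (W * Q s - (C + W * s)\<^sup>2) / Q s" using pos Qp[of s] by simp
  qed
  finally have "\<psi>2 s \<le> lam\<^sup>2 * cosh (lam * sqrt (Q s)) * (C + W * s)\<^sup>2 / Q s
      + (lam\<^sup>2 * cosh (lam * sqrt (Q s))) * ((W * Q s - (C + W * s)\<^sup>2) / Q s)"
    unfolding \<psi>2_def by simp
  also have "\<dots> = lam\<^sup>2 * W * \<psi> s" unfolding \<psi>_def using Qp[of s]
    by (simp add: field_simps)
  finally show "\<psi>2 s \<le> lam\<^sup>2 * W * \<psi> s" .
qed

lemma pinelis_scalar:
  fixes a C W lam q \<alpha> \<beta> B :: real
  assumes W: "W > 0" and CS: "C\<^sup>2 < a * W" and lam: "lam \<ge> 0"
    and q: "0 \<le> q" "q \<le> 1" and mz: "q * \<alpha> + (1 - q) * \<beta> = 0"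
    and ab: "\<bar>\<alpha>\<bar> \<le> B" "\<bar>\<beta>\<bar> \<le> B"
  shows "q * cosh (lam * sqrt (a + 2 * C * \<alpha> + W * \<alpha>\<^sup>2))
       + (1 - q) * cosh (lam * sqrt (a + 2 * C * \<beta> + W * \<beta>\<^sup>2))
       \<le> cosh (lam * sqrt a) * cosh (lam * B * sqrt W)"
proof -
  define Q where "Q \<equiv> \<lambda>s. a + 2 * C * s + W * s\<^sup>2"
  define \<psi> where "\<psi> \<equiv> \<lambda>s. cosh (lam * sqrt (Q s))"
  define \<psi>1 where "\<psi>1 \<equiv> \<lambda>s. lam * sinh (lam * sqrt (Q s)) * (C + W * s) / sqrt (Q s)"
  define \<psi>2 where "\<psi>2 \<equiv> \<lambda>s. lam\<^sup>2 * cosh (lam * sqrt (Q s)) * (C + W * s)\<^sup>2 / Q s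
                   + lam * sinh (lam * sqrt (Q s)) * (W * Q s - (C + W * s)\<^sup>2) / (Q s * sqrt (Q s))"
  have P1: "DERIV \<psi> s :> \<psi>1 s" for s
    unfolding \<psi>_def \<psi>1_def Q_def by (rule psi_bound(1)[OF W CS lam])
  have P2: "DERIV \<psi>1 s :> \<psi>2 s" for s
    unfolding \<psi>2_def \<psi>1_def Q_def by (rule psi_bound(2)[OF W CS lam])
  have P3: "\<psi>2 s \<le> lam\<^sup>2 * W * \<psi> s" for s
    unfolding \<psi>2_def \<psi>_def Q_def by (rule psi_bound(3)[OF W CS lam])
  define G where "G t = q * \<psi> (t * \<alpha>) + (1 - q) * \<psi> (t * \<beta>)" for t
  define G1 where "G1 t = q * (\<psi>1 (t * \<alpha>) * \<alpha>) + (1 - q) * (\<psi>1 (t * \<beta>) * \<beta>)" for t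
  define G2 where "G2 t = q * (\<psi>2 (t * \<alpha>) * \<alpha> * \<alpha>) + (1 - q) * (\<psi>2 (t * \<beta>) * \<beta> * \<beta>)" for t
  have lin: "DERIV (\<lambda>x. x * c) t :> c" for c t by (auto intro!: derivative_eq_intros)
  have c1: "DERIV (\<lambda>x. \<psi> (x * c)) t :> \<psi>1 (t * c) * c" for c t
    using DERIV_chain2[OF P1 lin] .
  have c2: "DERIV (\<lambda>x. \<psi>1 (x * c)) t :> \<psi>2 (t * c) * c" for c t
    using DERIV_chain2[OF P2 lin] .
  have d1: "DERIV G t :> G1 t" for t
    unfolding G_def G1_def
    by (intro DERIV_add DERIV_cmult c1)
  have d2: "DERIV G1 t :> G2 t" for t
    unfolding G1_def G2_def
    by (intro DERIV_add DERIV_cmult DERIV_cmult_right c2)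
  have psipos: "\<psi> s > 0" for s unfolding \<psi>_def by simp
  have one: "r * (\<psi>2 (t * x) * x * x) \<le> r * ((lam * B * sqrt W)\<^sup>2 * \<psi> (t * x))"
    if "0 \<le> r" "\<bar>x\<bar> \<le> B" for r x t
  proof (rule mult_left_mono[OF _ that(1)])
    have "\<psi>2 (t * x) * x * x \<le> (lam\<^sup>2 * W * \<psi> (t * x)) * x\<^sup>2"
      using mult_right_mono[OF P3[of "t*x"], of "x\<^sup>2"] by (simp add: power2_eq_square mult.assoc)
    also have "\<dots> \<le> (lam\<^sup>2 * W * \<psi> (t * x)) * B\<^sup>2"
    proof (rule mult_left_mono)
      show "x\<^sup>2 \<le> B\<^sup>2" using power_mono[OF that(2) abs_ge_zero, of 2] by simp
      show "0 \<le> lam\<^sup>2 * W * \<psi> (t * x)" using W psipos[of "t*x"] by simp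
    qed
    also have "\<dots> = (lam * B * sqrt W)\<^sup>2 * \<psi> (t * x)"
      using W by (simp add: power_mult_distrib)
    finally show "\<psi>2 (t * x) * x * x \<le> (lam * B * sqrt W)\<^sup>2 * \<psi> (t * x)" .
  qed
  have le: "G2 t \<le> (lam * B * sqrt W)\<^sup>2 * G t" for t
  proof -
    have "G2 t \<le> q * ((lam * B * sqrt W)\<^sup>2 * \<psi> (t * \<alpha>)) + (1 - q) * ((lam * B * sqrt W)\<^sup>2 * \<psi> (t * \<beta>))"
      unfolding G2_def using q by (intro add_mono one ab) auto
    also have "\<dots> = (lam * B * sqrt W)\<^sup>2 * G t" unfolding G_def by (simp only: algebra_simps)
    finally show ?thesis .
  qed
  have "G1 0 = \<psi>1 0 * (q * \<alpha> + (1 - q) * \<beta>)" unfolding G1_def by (simp only: algebra_simps mult_zero_left)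
  then have z: "G1 0 = 0" using mz by simp
  have "G 1 \<le> G 0 * cosh (lam * B * sqrt W)" by (rule ode_cmp[OF d1 d2 le z])
  moreover have "q * cosh (lam * sqrt a) + (1 - q) * cosh (lam * sqrt a) = cosh (lam * sqrt a)"
    by (simp add: algebra_simps)
  ultimately show ?thesis unfolding G_def \<psi>_def Q_def by simp
qed

definition Hh :: "real \<Rightarrow> real \<Rightarrow> nat set \<Rightarrow> (nat \<Rightarrow> real) \<Rightarrow> real" where
  "Hh lam d K x = cosh (lam * sqrt (d + (\<Sum>k\<in>K. (x k)\<^sup>2)))"

lemma Hh_pos: "Hh lam d K x > 0" unfolding Hh_def by simp

lemma pinelis_vec:
  fixes u v :: "nat \<Rightarrow> real" and K :: "nat set"
  assumes d: "d > 0" and lam: "lam \<ge> 0" and W: "(\<Sum>k\<in>K. (v k)\<^sup>2) = W" "W > 0"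
    and q: "0 \<le> q" "q \<le> 1" and mz: "q * \<alpha> + (1 - q) * \<beta> = 0"
    and ab: "\<bar>\<alpha>\<bar> \<le> B" "\<bar>\<beta>\<bar> \<le> B"
  shows "q * Hh lam d K (\<lambda>k. u k + \<alpha> * v k) + (1 - q) * Hh lam d K (\<lambda>k. u k + \<beta> * v k)
         \<le> Hh lam d K u * cosh (lam * B * sqrt W)"
proof -
  define A where "A = (\<Sum>k\<in>K. (u k)\<^sup>2)"
  define C where "C = (\<Sum>k\<in>K. u k * v k)"
  have exp: "d + (\<Sum>k\<in>K. (u k + s * v k)\<^sup>2) = (d + A) + 2 * C * s + W * s\<^sup>2" for s
  proof -
    have "(\<Sum>k\<in>K. (u k + s * v k)\<^sup>2) = (\<Sum>k\<in>K. (u k)\<^sup>2 + 2 * s * (u k * v k) + s\<^sup>2 * (v k)\<^sup>2)"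
      by (rule sum.cong) (simp_all add: power2_eq_square algebra_simps)
    also have "\<dots> = A + 2 * s * C + s\<^sup>2 * W"
      unfolding A_def C_def W(1)[symmetric] by (simp add: sum.distrib sum_distrib_left)
    finally show ?thesis by (simp add: algebra_simps)
  qed
  have CS: "C\<^sup>2 < (d + A) * W"
  proof -
    have "C\<^sup>2 \<le> A * W" unfolding C_def A_def W(1)[symmetric] by (rule Cauchy_Schwarz_ineq_sum)
    also have "\<dots> < (d + A) * W" using d W(2) by simp
    finally show ?thesis .
  qed
  have "q * cosh (lam * sqrt ((d + A) + 2 * C * \<alpha> + W * \<alpha>\<^sup>2))
       + (1 - q) * cosh (lam * sqrt ((d + A) + 2 * C * \<beta> + W * \<beta>\<^sup>2))
       \<le> cosh (lam * sqrt (d + A)) * cosh (lam * B * sqrt W)"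
    by (rule pinelis_scalar[OF W(2) CS lam q mz ab])
  then show ?thesis unfolding Hh_def exp[of \<alpha>, symmetric] exp[of \<beta>, symmetric]
    by (simp add: A_def mult.commute)
qed

lemma nn_integral_bernoulli:
  assumes "0 \<le> q" "q \<le> 1"
  shows "(\<integral>\<^sup>+y. X y \<partial>measure_pmf (bernoulli_pmf q)) = ennreal q * X True + ennreal (1 - q) * X False"
  using assms
  by (subst nn_integral_measure_pmf_support[where A=UNIV]) (auto simp: UNIV_bool mult.commute)

lemma ennreal_comb:
  fixes q X Y Z :: real
  assumes "0 \<le> q" "q \<le> 1" "0 \<le> X" "0 \<le> Y" "q * X + (1 - q) * Y \<le> Z"
  shows "ennreal q * ennreal X + ennreal (1 - q) * ennreal Y \<le> ennreal Z"
proof -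
  have "ennreal q * ennreal X = ennreal (q * X)" using assms by (simp add: ennreal_mult)
  moreover have "ennreal (1 - q) * ennreal Y = ennreal ((1 - q) * Y)" using assms by (simp add: ennreal_mult)
  moreover have "ennreal (q * X) + ennreal ((1 - q) * Y) = ennreal (q * X + (1 - q) * Y)"
    using assms by (simp add: ennreal_plus)
  ultimately show ?thesis using assms(5) by (simp add: ennreal_leI)
qed

lemma exp_bound:
  fixes I K :: "nat set" and v :: "nat \<Rightarrow> nat \<Rightarrow> real"
  assumes I: "finite I" and d: "d > 0" and lam: "lam \<ge> 0" and W: "W > 0"
    and h: "\<And>t. t \<in> I \<Longrightarrow> 0 \<le> q t \<and> q t \<le> 1 \<and> q t * \<alpha> t + (1 - q t) * \<beta> t = 0
              \<and> \<bar>\<alpha> t\<bar> \<le> B \<and> \<bar>\<beta> t\<bar> \<le> B \<and> (\<Sum>k\<in>K. (v t k)\<^sup>2) = W"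
  shows "(\<integral>\<^sup>+\<omega>. ennreal (Hh lam d K (\<lambda>k. \<Sum>t\<in>I. (if \<omega> t then \<alpha> t else \<beta> t) * v t k))
            \<partial>measure_pmf (Pi_pmf I False (\<lambda>t. bernoulli_pmf (q t))))
         \<le> ennreal (cosh (lam * sqrt d) * cosh (lam * B * sqrt W) ^ card I)"
  using I h
proof (induction I rule: finite_induct)
  case empty
  then show ?case by (simp add: Hh_def)
next
  case (insert x A)
  define c where "c = cosh (lam * B * sqrt W)"
  have cpos: "c > 0" unfolding c_def by simp
  define u where "u f = (\<lambda>k. \<Sum>t\<in>A. (if f t then \<alpha> t else \<beta> t) * v t k)" for f :: "nat \<Rightarrow> bool"
  define H where "H f = ennreal (Hh lam d K (\<lambda>k. \<Sum>t\<in>insert x A. (if f t then \<alpha> t else \<beta> t) * v t k))" for f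
  have hx: "0 \<le> q x" "q x \<le> 1" "q x * \<alpha> x + (1 - q x) * \<beta> x = 0" "\<bar>\<alpha> x\<bar> \<le> B" "\<bar>\<beta> x\<bar> \<le> B"
    "(\<Sum>k\<in>K. (v x k)\<^sup>2) = W" using insert.prems by auto
  have eqA: "(\<lambda>k. \<Sum>t\<in>insert x A. (if (f(x:=y)) t then \<alpha> t else \<beta> t) * v t k)
      = (\<lambda>k. u f k + (if y then \<alpha> x else \<beta> x) * v x k)" for f y
  proof
    fix k
    have "(\<Sum>t\<in>A. (if (f(x:=y)) t then \<alpha> t else \<beta> t) * v t k) = u f k"
      unfolding u_def by (rule sum.cong) (use insert.hyps in auto)
    then show "(\<Sum>t\<in>insert x A. (if (f(x:=y)) t then \<alpha> t else \<beta> t) * v t k)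
      = u f k + (if y then \<alpha> x else \<beta> x) * v x k"
      using insert.hyps by simp
  qed
  have HT: "H (f(x:=True)) = ennreal (Hh lam d K (\<lambda>k. u f k + \<alpha> x * v x k))" for f
    unfolding H_def eqA by simp
  have HF: "H (f(x:=False)) = ennreal (Hh lam d K (\<lambda>k. u f k + \<beta> x * v x k))" for f
    unfolding H_def eqA by simp
  have "(\<integral>\<^sup>+\<omega>. H \<omega> \<partial>measure_pmf (Pi_pmf (insert x A) False (\<lambda>t. bernoulli_pmf (q t))))
      = (\<integral>\<^sup>+y. \<integral>\<^sup>+f. H (f(x:=y)) \<partial>measure_pmf (Pi_pmf A False (\<lambda>t. bernoulli_pmf (q t))) \<partial>measure_pmf (bernoulli_pmf (q x)))"
    by (simp add: Pi_pmf_insert[OF insert.hyps] nn_integral_pair_pmf' case_prod_beta)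
  also have "\<dots> = ennreal (q x) * (\<integral>\<^sup>+f. H (f(x:=True)) \<partial>measure_pmf (Pi_pmf A False (\<lambda>t. bernoulli_pmf (q t))))
      + ennreal (1 - q x) * (\<integral>\<^sup>+f. H (f(x:=False)) \<partial>measure_pmf (Pi_pmf A False (\<lambda>t. bernoulli_pmf (q t))))"
    by (rule nn_integral_bernoulli) (use hx in auto)
  also have "\<dots> = (\<integral>\<^sup>+f. ennreal (q x) * H (f(x:=True)) + ennreal (1 - q x) * H (f(x:=False))
                    \<partial>measure_pmf (Pi_pmf A False (\<lambda>t. bernoulli_pmf (q t))))"
    by (simp add: nn_integral_add nn_integral_cmult)
  also have "\<dots> \<le> (\<integral>\<^sup>+f. ennreal c * ennreal (Hh lam d K (u f))
                    \<partial>measure_pmf (Pi_pmf A False (\<lambda>t. bernoulli_pmf (q t))))"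
  proof (rule nn_integral_mono)
    fix f
    have "q x * Hh lam d K (\<lambda>k. u f k + \<alpha> x * v x k) + (1 - q x) * Hh lam d K (\<lambda>k. u f k + \<beta> x * v x k)
         \<le> Hh lam d K (u f) * c"
      unfolding c_def by (rule pinelis_vec[OF d lam hx(6) W hx(1-5)])
    then show "ennreal (q x) * H (f(x:=True)) + ennreal (1 - q x) * H (f(x:=False)) \<le> ennreal c * ennreal (Hh lam d K (u f))"
    proof -
      have e: "ennreal c * ennreal (Hh lam d K (u f)) = ennreal (c * Hh lam d K (u f))"
        using cpos Hh_pos[of lam d K "u f"] by (simp add: ennreal_mult)
      show ?thesis unfolding HT HF e
        by (rule ennreal_comb) (use hx(1,2) Hh_pos[of lam d K] \<open>_ \<le> Hh lam d K (u f) * c\<close> in \<open>auto intro: less_imp_le simp: mult.commute\<close>)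
    qed
  qed
  also have "\<dots> = ennreal c * (\<integral>\<^sup>+f. ennreal (Hh lam d K (u f)) \<partial>measure_pmf (Pi_pmf A False (\<lambda>t. bernoulli_pmf (q t))))"
    by (simp add: nn_integral_cmult)
  also have "\<dots> \<le> ennreal c * ennreal (cosh (lam * sqrt d) * c ^ card A)"
    unfolding u_def c_def using insert.IH insert.prems by (intro mult_left_mono) auto
  also have "\<dots> = ennreal (cosh (lam * sqrt d) * c ^ card (insert x A))"
    using insert.hyps cpos by (simp add: ennreal_mult'[symmetric] algebra_simps)
  finally show ?case unfolding H_def c_def .
qed

lemma cosh_le_exp_sq: "cosh (x::real) \<le> exp (x\<^sup>2 / 2)"
proof -
  have main: "cosh y \<le> exp (y\<^sup>2 / 2)" if y: "y \<ge> 0" for y :: real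
  proof -
    have "-(2*y) * (1/2) + ln (1 + (1/2) * (exp (2*y) - 1)) \<le> (2*y)\<^sup>2 / 8"
      by (rule Hoeffdings_lemma_aux) (use y in auto)
    moreover have "1 + (1/2) * (exp (2*y) - 1) = exp y * cosh y"
      by (simp add: cosh_def field_simps exp_add[symmetric] exp_diff[symmetric])
    moreover have "ln (exp y * cosh y) = y + ln (cosh y)"
      by (simp add: ln_mult)
    ultimately have "ln (cosh y) \<le> y\<^sup>2 / 2" by (simp add: power2_eq_square)
    then have "exp (ln (cosh y)) \<le> exp (y\<^sup>2 / 2)" by (simp only: exp_le_cancel_iff)
    moreover have "exp (ln (cosh y)) = cosh y" using cosh_real_pos[of y] by simp
    ultimately show ?thesis by simp
  qed
  show ?thesis
  proof (cases "x \<ge> 0")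
    case True then show ?thesis by (rule main)
  next
    case False then show ?thesis using main[of "-x"] by simp
  qed
qed

lemma tail_bound:
  fixes I K :: "nat set" and v :: "nat \<Rightarrow> nat \<Rightarrow> real"
  assumes I: "finite I" and d: "d > 0" and lam: "lam \<ge> 0" and W: "W > 0"
    and h: "\<And>t. t \<in> I \<Longrightarrow> 0 \<le> q t \<and> q t \<le> 1 \<and> q t * \<alpha> t + (1 - q t) * \<beta> t = 0
              \<and> \<bar>\<alpha> t\<bar> \<le> B \<and> \<bar>\<beta> t\<bar> \<le> B \<and> (\<Sum>k\<in>K. (v t k)\<^sup>2) = W"
    and r: "r \<ge> 0"
  shows "measure_pmf.prob (Pi_pmf I False (\<lambda>t. bernoulli_pmf (q t)))
           {\<omega>. r < sqrt (\<Sum>k\<in>K. (\<Sum>t\<in>I. (if \<omega> t then \<alpha> t else \<beta> t) * v t k)\<^sup>2)}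
         \<le> cosh (lam * sqrt d) * cosh (lam * B * sqrt W) ^ card I / cosh (lam * r)"
proof -
  define P where "P = Pi_pmf I False (\<lambda>t. bernoulli_pmf (q t))"
  define S where "S \<omega> = (\<lambda>k. \<Sum>t\<in>I. (if \<omega> t then \<alpha> t else \<beta> t) * v t k)" for \<omega> :: "nat \<Rightarrow> bool"
  define c where "c = cosh (lam * r)"
  define bd where "bd = cosh (lam * sqrt d) * cosh (lam * B * sqrt W) ^ card I"
  have cpos: "c > 0" unfolding c_def by simp
  have bdpos: "bd \<ge> 0" unfolding bd_def by simp
  define E where "E = {\<omega>. c \<le> Hh lam d K (S \<omega>)}"
  have sub: "{\<omega>. r < sqrt (\<Sum>k\<in>K. (S \<omega> k)\<^sup>2)} \<subseteq> E"
  proof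
    fix \<omega> assume "\<omega> \<in> {\<omega>. r < sqrt (\<Sum>k\<in>K. (S \<omega> k)\<^sup>2)}"
    then have a: "r \<le> sqrt (\<Sum>k\<in>K. (S \<omega> k)\<^sup>2)" by simp
    have b: "sqrt (\<Sum>k\<in>K. (S \<omega> k)\<^sup>2) \<le> sqrt (d + (\<Sum>k\<in>K. (S \<omega> k)\<^sup>2))" using d by simp
    have "r \<le> sqrt (d + (\<Sum>k\<in>K. (S \<omega> k)\<^sup>2))" using a b by linarith
    then have "lam * r \<le> lam * sqrt (d + (\<Sum>k\<in>K. (S \<omega> k)\<^sup>2))"
      using lam by (intro mult_left_mono) auto
    then have "cosh (lam * r) \<le> cosh (lam * sqrt (d + (\<Sum>k\<in>K. (S \<omega> k)\<^sup>2)))"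
      using lam r d by (subst cosh_real_nonneg_le_iff) (auto intro!: mult_nonneg_nonneg add_nonneg_nonneg sum_nonneg)
    then show "\<omega> \<in> E" unfolding E_def Hh_def c_def by simp
  qed
  have "ennreal c * emeasure (measure_pmf P) E = (\<integral>\<^sup>+\<omega>. ennreal c * indicator E \<omega> \<partial>measure_pmf P)"
    by (simp add: nn_integral_cmult_indicator)
  also have "\<dots> \<le> (\<integral>\<^sup>+\<omega>. ennreal (Hh lam d K (S \<omega>)) \<partial>measure_pmf P)"
    by (rule nn_integral_mono) (auto simp: E_def split: split_indicator intro: ennreal_leI)
  also have "\<dots> \<le> ennreal bd"
    unfolding P_def S_def bd_def by (rule exp_bound[OF I d lam W h])
  finally have "ennreal c * ennreal (measure_pmf.prob P E) \<le> ennreal bd"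
    by (simp add: measure_pmf.emeasure_eq_measure)
  then have "ennreal (c * measure_pmf.prob P E) \<le> ennreal bd"
    using cpos by (simp add: ennreal_mult)
  then have "c * measure_pmf.prob P E \<le> bd" using bdpos by (simp add: ennreal_le_iff)
  then have "measure_pmf.prob P E \<le> bd / c" using cpos by (simp add: field_simps)
  moreover have "measure_pmf.prob P {\<omega>. r < sqrt (\<Sum>k\<in>K. (S \<omega> k)\<^sup>2)} \<le> measure_pmf.prob P E"
    by (rule measure_pmf.finite_measure_mono[OF sub]) simp
  ultimately show ?thesis unfolding P_def S_def bd_def c_def by simp
qed

lemma final_arith:
  fixes B :: real and m n :: nat
  assumes B: "B > 0" and m: "m \<ge> 1" and n: "n \<ge> 1"
  defines "R \<equiv> 2 * B * sqrt (real m * (ln (real n) + 2))"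
  defines "lam \<equiv> R / (2 * real m * B\<^sup>2)"
  shows "lam > 0"
    and "cosh (lam * sqrt (1 / lam\<^sup>2)) * cosh (lam * B * sqrt 2) ^ m / cosh (lam * R) \<le> 2 / real n"
proof -
  have Ln: "ln (real n) \<ge> 0" using n by simp
  have mpos: "real m > 0" using m by simp
  have Rpos: "R > 0" unfolding R_def using B Ln mpos by (auto intro!: mult_pos_pos)
  have R2: "R\<^sup>2 = 4 * B\<^sup>2 * real m * (ln (real n) + 2)"
    unfolding R_def using Ln mpos by (simp add: power_mult_distrib)
  show lpos: "lam > 0" unfolding lam_def using Rpos mpos B by simp
  have s1: "lam * sqrt (1 / lam\<^sup>2) = 1" using lpos by (simp add: real_sqrt_divide)
  have c1: "cosh (lam * B * sqrt 2) \<le> exp (lam\<^sup>2 * B\<^sup>2)"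
    using cosh_le_exp_sq[of "lam * B * sqrt 2"] by (simp add: power_mult_distrib)
  have c2: "cosh (lam * B * sqrt 2) ^ m \<le> exp (real m * (lam\<^sup>2 * B\<^sup>2))"
    using power_mono[OF c1, of m] by (simp add: exp_of_nat_mult[symmetric])
  have c3: "exp (lam * R) / 2 \<le> cosh (lam * R)" by (simp add: cosh_def)
  have e1: "real m * (lam\<^sup>2 * B\<^sup>2) = ln (real n) + 2"
    unfolding lam_def using R2 mpos B by (simp add: power_divide field_simps power2_eq_square)
  have e2: "lam * R = 2 * (ln (real n) + 2)"
    unfolding lam_def using R2 mpos B by (simp add: field_simps power2_eq_square)
  have cosh1: "cosh (1::real) \<le> exp 2"
  proof -
    have "cosh (1::real) = (exp 1 + exp (-1)) / 2" by (simp add: cosh_def)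
    also have "\<dots> \<le> exp 1" using exp_le_cancel_iff[of "-1" 1] by simp
    also have "\<dots> \<le> exp 2" by simp
    finally show ?thesis .
  qed
  define E where "E = exp (ln (real n) + 2)"
  have Epos: "E > 0" unfolding E_def by simp
  have num: "cosh 1 * cosh (lam * B * sqrt 2) ^ m \<le> exp 2 * E"
    unfolding E_def e1[symmetric]
    by (rule mult_mono[OF cosh1 c2]) auto
  have den: "exp (lam * R) / 2 \<le> cosh (lam * R)" by (rule c3)
  have "cosh (lam * sqrt (1 / lam\<^sup>2)) * cosh (lam * B * sqrt 2) ^ m / cosh (lam * R)
      \<le> (exp 2 * E) / (exp (lam * R) / 2)"
    unfolding s1 by (rule frac_le[OF _ num _ den]) (use Epos in auto)
  also have "exp (lam * R) = E * E" unfolding e2 E_def by (simp add: exp_add[symmetric])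
  also have "(exp 2 * E) / (E * E / 2) = 2 * exp 2 / E" using Epos by (simp add: field_simps)
  also have "E = real n * exp 2" unfolding E_def using n by (simp add: exp_add)
  also have "2 * exp 2 / (real n * exp 2) = 2 / real n" by simp
  finally show "cosh (lam * sqrt (1 / lam\<^sup>2)) * cosh (lam * B * sqrt 2) ^ m / cosh (lam * R) \<le> 2 / real n" .
qed

context
  fixes F f :: "real \<Rightarrow> real"
  assumes dens: "zero_mean_density f" and cdf: "cdf_of_density F f"
begin

lemma f_meas[measurable]: "f \<in> borel_measurable borel" using dens by (simp add: zero_mean_density_def)
lemma f_nn: "0 \<le> f x" using dens by (simp add: zero_mean_density_def)
lemma f_int: "integrable lborel f" using dens by (simp add: zero_mean_density_def)
lemma f_one: "(LINT z|lborel. f z) = 1" using dens by (simp add: zero_mean_density_def)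

lemma F_eq: "F y = (LINT w|lborel. indicator {..y} w * f w)"
  using cdf by (simp add: cdf_of_density_def set_lebesgue_integral_def)

lemma ind_int: "integrable lborel (\<lambda>w. indicator {..y} w * f w)"
  using integrable_mult_indicator[OF _ f_int, of "{..y}"] by simp

lemma F_nn: "0 \<le> F y"
  unfolding F_eq by (rule integral_nonneg_AE) (auto simp: f_nn split: split_indicator)

lemma F_le1: "F y \<le> 1"
proof -
  have "F y \<le> (LINT w|lborel. f w)"
    unfolding F_eq by (rule integral_mono[OF ind_int f_int]) (auto simp: f_nn split: split_indicator)
  then show ?thesis using f_one by simp
qed

lemma F_mono: "mono F"
proof
  fix x y :: real assume "x \<le> y"
  then show "F x \<le> F y"
    unfolding F_eq by (intro integral_mono[OF ind_int ind_int]) (auto simp: f_nn split: split_indicator)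
qed

lemma F_meas[measurable]: "F \<in> borel_measurable borel"
  by (rule borel_measurable_mono[OF F_mono])

lemma F_nn_integral: "ennreal (F y) = (\<integral>\<^sup>+w. ennreal (indicator {..y} w * f w) \<partial>lborel)"
  unfolding F_eq by (rule nn_integral_eq_integral[OF ind_int, symmetric]) (auto simp: f_nn)

lemma f_nn_one: "(\<integral>\<^sup>+w. ennreal (f w) \<partial>lborel) = 1"
  using nn_integral_eq_integral[OF f_int] f_one f_nn by simp

lemma p2_int: "integrable lborel (\<lambda>z. F (x + z) * f z)"
proof (rule Bochner_Integration.integrable_bound[OF f_int])
  show "(\<lambda>z. F (x + z) * f z) \<in> borel_measurable lborel" by measurable
  show "AE z in lborel. norm (F (x + z) * f z) \<le> norm (f z)"
    using F_nn F_le1 f_nn by (auto simp: abs_mult intro!: mult_left_le_one_le)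
qed

lemma p2_nn: "0 \<le> p2 F f x"
  unfolding p2_def by (rule integral_nonneg_AE) (auto simp: F_nn f_nn)

lemma p2_nn_integral:
  "ennreal (p2 F f x) = (\<integral>\<^sup>+z. \<integral>\<^sup>+w. ennreal (if w \<le> x + z then f w * f z else 0) \<partial>lborel \<partial>lborel)"
proof -
  have "ennreal (p2 F f x) = (\<integral>\<^sup>+z. ennreal (F (x + z) * f z) \<partial>lborel)"
    unfolding p2_def by (rule nn_integral_eq_integral[OF p2_int, symmetric]) (auto simp: F_nn f_nn)
  also have "\<dots> = (\<integral>\<^sup>+z. (\<integral>\<^sup>+w. ennreal (indicator {..x+z} w * f w) \<partial>lborel) * ennreal (f z) \<partial>lborel)"
    by (rule nn_integral_cong) (simp only: ennreal_mult[OF F_nn f_nn] F_nn_integral)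
  also have "\<dots> = (\<integral>\<^sup>+z. \<integral>\<^sup>+w. ennreal (indicator {..x+z} w * f w) * ennreal (f z) \<partial>lborel \<partial>lborel)"
    by (rule nn_integral_cong) (rule nn_integral_multc[symmetric], measurable)
  also have "\<dots> = (\<integral>\<^sup>+z. \<integral>\<^sup>+w. ennreal (if w \<le> x + z then f w * f z else 0) \<partial>lborel \<partial>lborel)"
    by (intro nn_integral_cong) (auto simp: ennreal_mult f_nn split: split_indicator)
  finally show ?thesis .
qed

lemma p2_sym: "p2 F f x + p2 F f (-x) = 1"
proof -
  have "ennreal (p2 F f (-x)) = (\<integral>\<^sup>+z. \<integral>\<^sup>+w. ennreal (if w \<le> -x + z then f w * f z else 0) \<partial>lborel \<partial>lborel)"
    by (rule p2_nn_integral)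
  also have "\<dots> = (\<integral>\<^sup>+w. \<integral>\<^sup>+z. ennreal (if w \<le> -x + z then f w * f z else 0) \<partial>lborel \<partial>lborel)"
    by (rule lborel_pair.Fubini') measurable
  also have "\<dots> = (\<integral>\<^sup>+z. \<integral>\<^sup>+w. ennreal (if x + z \<le> w then f w * f z else 0) \<partial>lborel \<partial>lborel)"
    by (intro nn_integral_cong) (auto simp: mult.commute)
  finally have m: "ennreal (p2 F f (-x)) = \<dots>" .
  have "ennreal (p2 F f x) + ennreal (p2 F f (-x)) =
     (\<integral>\<^sup>+z. (\<integral>\<^sup>+w. ennreal (if w \<le> x + z then f w * f z else 0) \<partial>lborel)
            + (\<integral>\<^sup>+w. ennreal (if x + z \<le> w then f w * f z else 0) \<partial>lborel) \<partial>lborel)"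
    unfolding p2_nn_integral[of x] m
    by (rule nn_integral_add[symmetric]) measurable
  also have "\<dots> = (\<integral>\<^sup>+z. (\<integral>\<^sup>+w. ennreal (f w) * ennreal (f z) \<partial>lborel) \<partial>lborel)"
  proof (rule nn_integral_cong)
    fix z
    have "(\<integral>\<^sup>+w. ennreal (if w \<le> x + z then f w * f z else 0) \<partial>lborel)
            + (\<integral>\<^sup>+w. ennreal (if x + z \<le> w then f w * f z else 0) \<partial>lborel)
        = (\<integral>\<^sup>+w. ennreal (if w \<le> x + z then f w * f z else 0)
            + ennreal (if x + z \<le> w then f w * f z else 0) \<partial>lborel)"
      by (rule nn_integral_add[symmetric]) measurable
    also have "\<dots> = (\<integral>\<^sup>+w. ennreal (f w) * ennreal (f z) \<partial>lborel)"
    proof (rule nn_integral_cong_AE)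
      show "AE w in lborel. ennreal (if w \<le> x + z then f w * f z else 0)
            + ennreal (if x + z \<le> w then f w * f z else 0) = ennreal (f w) * ennreal (f z)"
        using AE_lborel_singleton[of "x + z"]
        by eventually_elim (auto simp: ennreal_mult f_nn)
    qed
    finally show "(\<integral>\<^sup>+w. ennreal (if w \<le> x + z then f w * f z else 0) \<partial>lborel)
            + (\<integral>\<^sup>+w. ennreal (if x + z \<le> w then f w * f z else 0) \<partial>lborel)
        = (\<integral>\<^sup>+w. ennreal (f w) * ennreal (f z) \<partial>lborel)" .
  qed
  also have "\<dots> = (\<integral>\<^sup>+z. ennreal (f z) \<partial>lborel)"
    by (rule nn_integral_cong) (simp add: nn_integral_multc f_nn_one)
  also have "\<dots> = 1" by (rule f_nn_one)
  finally have "ennreal (p2 F f x) + ennreal (p2 F f (-x)) = 1" .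
  then have "ennreal (p2 F f x + p2 F f (-x)) = 1"
    using ennreal_plus[OF p2_nn[of x] p2_nn[of "-x"]] by simp
  then show ?thesis using p2_nn[of x] p2_nn[of "-x"]
    by (metis ennreal_1 ennreal_inj add_nonneg_nonneg zero_le_one)
qed

lemma p2_le1: "p2 F f x \<le> 1"
  using p2_sym[of x] p2_nn[of "-x"] by simp

end

context
  fixes F f :: "real \<Rightarrow> real"
  assumes dens: "zero_mean_density f" and cdf: "cdf_of_density F f"
begin

lemma ev_lt:
  fixes L :: "real \<Rightarrow> real"
  assumes "L differentiable (at x)" "L x < c"
  shows "eventually (\<lambda>y. L y < c) (nhds x)"
proof -
  have "isCont L x" using assms(1) by (rule differentiable_imp_continuous_within)
  then have "(L \<longlongrightarrow> L x) (nhds x)" by (simp add: isCont_def tendsto_at_iff_tendsto_nhds)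
  then show ?thesis using assms(2) by (rule order_tendstoD)
qed

lemma ev_gt:
  fixes L :: "real \<Rightarrow> real"
  assumes "L differentiable (at x)" "c < L x"
  shows "eventually (\<lambda>y. c < L y) (nhds x)"
proof -
  have "isCont L x" using assms(1) by (rule differentiable_imp_continuous_within)
  then have "(L \<longlongrightarrow> L x) (nhds x)" by (simp add: isCont_def tendsto_at_iff_tendsto_nhds)
  then show ?thesis using assms(2) by (rule order_tendstoD)
qed

lemma L_deriv:
  assumes "(\<lambda>u. ln (p2 F f u)) differentiable (at x)"
  shows "DERIV (\<lambda>u. ln (p2 F f u)) x :> deriv (\<lambda>u. ln (p2 F f u)) x"
  using assms by (simp add: DERIV_deriv_iff_real_differentiable)

lemma M_deriv:
  assumes "(\<lambda>u. ln (p2 F f u)) differentiable (at (-x))"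
  shows "DERIV (\<lambda>y. ln (p2 F f (-y))) x :> - deriv (\<lambda>u. ln (p2 F f u)) (-x)"
proof -
  have "DERIV (\<lambda>y. ln (p2 F f (-y))) x :> deriv (\<lambda>u. ln (p2 F f u)) (-x) * (-1)"
  proof -
    have d1: "DERIV (\<lambda>y. -y) x :> (-1::real)" by (auto intro!: derivative_eq_intros)
    show ?thesis using DERIV_chain2[of "\<lambda>u. ln (p2 F f u)" _ "\<lambda>y. -y", OF L_deriv[OF assms] d1] by simp
  qed
  then show ?thesis by simp
qed

lemma M_diff:
  assumes "(\<lambda>u. ln (p2 F f u)) differentiable (at (-x))"
  shows "(\<lambda>y. ln (p2 F f (-y))) differentiable (at x)"
  using M_deriv[OF assms] real_differentiable_def by blast

lemma zero_case:
  assumes dx: "(\<lambda>u. ln (p2 F f u)) differentiable (at x)"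
    and dmx: "(\<lambda>u. ln (p2 F f u)) differentiable (at (-x))"
    and p0: "p2 F f x = 0"
  shows "deriv (\<lambda>u. ln (p2 F f u)) (-x) = 0"
proof -
  define L where "L = (\<lambda>u. ln (p2 F f u))"
  define M where "M = (\<lambda>y. ln (p2 F f (-y)))"
  have Lx: "L x = 0" unfolding L_def using p0 by simp
  have pmx: "p2 F f (-x) = 1" using p2_sym[OF dens cdf, of x] p0 by simp
  have Mx: "M x = 0" unfolding M_def using pmx by simp
  have dL: "L differentiable (at x)" using dx unfolding L_def .
  have dM: "M differentiable (at x)" using M_diff[OF dmx] unfolding M_def .
  have l2: "0 < ln (2::real)" by simp
  have ev: "eventually (\<lambda>y. L y < ln 2 \<and> - ln 2 < L y \<and> M y < ln 2 \<and> - ln 2 < M y) (nhds x)"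
    using Lx Mx l2 by (intro eventually_conj ev_lt[OF dL] ev_gt[OF dL] ev_lt[OF dM] ev_gt[OF dM]) auto
  have "eventually (\<lambda>y. M y = 0) (nhds x)"
    using ev
  proof eventually_elim
    case (elim y)
    show "M y = 0"
    proof (cases "p2 F f y = 0")
      case True
      then have "p2 F f (-y) = 1" using p2_sym[OF dens cdf, of y] by simp
      then show ?thesis unfolding M_def by simp
    next
      case False
      then have py: "p2 F f y > 0" using p2_nn[OF dens cdf, of y] by simp
      have "ln (1/2) < ln (p2 F f y)" using elim py by (simp add: ln_div L_def)
      then have "1/2 < p2 F f y" using py by (subst (asm) ln_less_cancel_iff) auto
      then have pmy: "p2 F f (-y) < 1/2" using p2_sym[OF dens cdf, of y] by simp
      show ?thesis
      proof (cases "p2 F f (-y) = 0")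
        case True then show ?thesis unfolding M_def by simp
      next
        case False
        then have pm: "p2 F f (-y) > 0" using p2_nn[OF dens cdf, of "-y"] by simp
        have "ln (1/2) < ln (p2 F f (-y))" using elim pm by (simp add: ln_div M_def)
        then have "1/2 < p2 F f (-y)" using pm by (subst (asm) ln_less_cancel_iff) auto
        with pmy show ?thesis by simp
      qed
    qed
  qed
  then have "DERIV M x :> - deriv L (-x) \<longleftrightarrow> DERIV (\<lambda>_. 0::real) x :> - deriv L (-x)"
    by (intro DERIV_cong_ev) auto
  moreover have "DERIV M x :> - deriv L (-x)" unfolding M_def L_def by (rule M_deriv[OF dmx])
  ultimately have "DERIV (\<lambda>_. 0::real) x :> - deriv L (-x)" by simp
  then have "- deriv L (-x) = 0" using DERIV_const DERIV_unique by blast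
  then show ?thesis unfolding L_def by simp
qed

lemma mean_zero:
  assumes dx: "(\<lambda>u. ln (p2 F f u)) differentiable (at x)"
    and dmx: "(\<lambda>u. ln (p2 F f u)) differentiable (at (-x))"
  shows "p2 F f x * deriv (\<lambda>u. ln (p2 F f u)) x = (1 - p2 F f x) * deriv (\<lambda>u. ln (p2 F f u)) (-x)"
proof -
  define L where "L = (\<lambda>u. ln (p2 F f u))"
  define M where "M = (\<lambda>y. ln (p2 F f (-y)))"
  define p where "p = p2 F f x"
  have sym: "p2 F f (-y) = 1 - p2 F f y" for y using p2_sym[OF dens cdf, of y] by simp
  consider "p = 0" | "p = 1" | "0 < p \<and> p < 1"
    using p2_nn[OF dens cdf, of x] p2_le1[OF dens cdf, of x] unfolding p_def by linarith
  then show ?thesis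
  proof cases
    case 1
    then show ?thesis using zero_case[OF dx dmx] unfolding p_def by simp
  next
    case 2
    have "p2 F f (-x) = 0" using sym[of x] 2 unfolding p_def by simp
    then have "deriv (\<lambda>u. ln (p2 F f u)) (- (-x)) = 0"
      using zero_case[of "-x"] dx dmx by simp
    then show ?thesis using 2 unfolding p_def by simp
  next
    case 3
    have dL: "L differentiable (at x)" using dx unfolding L_def .
    have dM: "M differentiable (at x)" using M_diff[OF dmx] unfolding M_def .
    have Lx: "L x < 0" unfolding L_def using 3 unfolding p_def by simp
    have Mx: "M x < 0" unfolding M_def using 3 sym[of x] unfolding p_def by simp
    have "eventually (\<lambda>y. L y < 0 \<and> M y < 0) (nhds x)"
      by (intro eventually_conj ev_lt[OF dL Lx] ev_lt[OF dM Mx])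
    then have ev: "eventually (\<lambda>y. exp (L y) + exp (M y) = 1) (nhds x)"
    proof eventually_elim
      case (elim y)
      then have "p2 F f y \<noteq> 0" "p2 F f (-y) \<noteq> 0" unfolding L_def M_def by auto
      then have "p2 F f y > 0" "p2 F f (-y) > 0"
        using p2_nn[OF dens cdf, of y] p2_nn[OF dens cdf, of "-y"] by auto
      then show ?case unfolding L_def M_def using sym[of y] by simp
    qed
    have d: "DERIV (\<lambda>y. exp (L y) + exp (M y)) x :> exp (L x) * deriv L x + exp (M x) * (- deriv L (-x))"
    proof -
      have a: "DERIV L x :> deriv L x" unfolding L_def by (rule L_deriv[OF dx])
      have b: "DERIV M x :> - deriv L (-x)" unfolding L_def M_def by (rule M_deriv[OF dmx])
      show ?thesis by (intro DERIV_add DERIV_chain2[OF DERIV_exp a] DERIV_chain2[OF DERIV_exp b])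
    qed
    have "DERIV (\<lambda>y. exp (L y) + exp (M y)) x :> exp (L x) * deriv L x + exp (M x) * (- deriv L (-x))
       \<longleftrightarrow> DERIV (\<lambda>_. 1::real) x :> exp (L x) * deriv L x + exp (M x) * (- deriv L (-x))"
      using ev by (intro DERIV_cong_ev) auto
    with d have "DERIV (\<lambda>_. 1::real) x :> exp (L x) * deriv L x + exp (M x) * (- deriv L (-x))" by simp
    then have z: "exp (L x) * deriv L x + exp (M x) * (- deriv L (-x)) = 0"
      using DERIV_const DERIV_unique by blast
    have "exp (L x) = p" unfolding L_def p_def using 3 unfolding p_def by simp
    moreover have "exp (M x) = 1 - p" unfolding M_def p_def using 3 sym[of x] unfolding p_def by simp
    ultimately have "p * deriv L x + (1 - p) * (- deriv L (-x)) = 0" using z by simp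
    then have "p * deriv L x = (1 - p) * deriv L (-x)" by (simp add: algebra_simps)
    then show ?thesis unfolding L_def p_def .
  qed
qed

end

lemma term_deriv:
  fixes L :: "real \<Rightarrow> real" and \<theta> :: "nat \<Rightarrow> real"
  assumes yz: "y \<noteq> z" and dL: "L differentiable (at (\<theta> y - \<theta> z))"
  shows "DERIV (\<lambda>s. L ((\<theta>(k:=s)) y - (\<theta>(k:=s)) z)) (\<theta> k) :>
     (if y = k then deriv L (\<theta> y - \<theta> z) else 0) - (if z = k then deriv L (\<theta> y - \<theta> z) else 0)"
proof -
  have D: "DERIV L (\<theta> y - \<theta> z) :> deriv L (\<theta> y - \<theta> z)"
    using dL by (simp add: DERIV_deriv_iff_real_differentiable)
  consider "y = k" | "z = k" | "y \<noteq> k \<and> z \<noteq> k" by blast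
  then show ?thesis
  proof cases
    case 1
    with yz have e: "(\<lambda>s. L ((\<theta>(k:=s)) y - (\<theta>(k:=s)) z)) = (\<lambda>s. L (s - \<theta> z))" by auto
    have "DERIV (\<lambda>s. s - \<theta> z) (\<theta> k) :> 1" by (auto intro!: derivative_eq_intros)
    from DERIV_chain2[of L _ "\<lambda>s. s - \<theta> z", OF _ this] D 1
    have "DERIV (\<lambda>s. L (s - \<theta> z)) (\<theta> k) :> deriv L (\<theta> y - \<theta> z) * 1" by simp
    then show ?thesis unfolding e using 1 yz by simp
  next
    case 2
    with yz have e: "(\<lambda>s. L ((\<theta>(k:=s)) y - (\<theta>(k:=s)) z)) = (\<lambda>s. L (\<theta> y - s))" by auto
    have "DERIV (\<lambda>s. \<theta> y - s) (\<theta> k) :> -1" by (auto intro!: derivative_eq_intros)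
    from DERIV_chain2[of L _ "\<lambda>s. \<theta> y - s", OF _ this] D 2
    have "DERIV (\<lambda>s. L (\<theta> y - s)) (\<theta> k) :> deriv L (\<theta> y - \<theta> z) * -1" by simp
    then show ?thesis unfolding e using 2 yz by simp
  next
    case 3
    then have e: "(\<lambda>s. L ((\<theta>(k:=s)) y - (\<theta>(k:=s)) z)) = (\<lambda>s. L (\<theta> y - \<theta> z))" by auto
    show ?thesis unfolding e using 3 by simp
  qed
qed

lemma grad_formula:
  fixes \<theta> :: "nat \<Rightarrow> real" and y z :: "nat \<Rightarrow> nat"
  assumes h: "\<And>t. t \<in> {1..m} \<Longrightarrow> y t \<noteq> z t \<and>
                 (\<lambda>u. ln (p2 F f u)) differentiable (at (\<theta> (y t) - \<theta> (z t)))"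
  shows "neg_loglik_grad F f m y z \<theta> k =
     - (\<Sum>t\<in>{1..m}. (if y t = k then deriv (\<lambda>u. ln (p2 F f u)) (\<theta> (y t) - \<theta> (z t)) else 0)
                   - (if z t = k then deriv (\<lambda>u. ln (p2 F f u)) (\<theta> (y t) - \<theta> (z t)) else 0))"
proof -
  have "DERIV (\<lambda>s. - loglik F f m y z (\<theta>(k := s))) (\<theta> k) :>
     - (\<Sum>t\<in>{1..m}. (if y t = k then deriv (\<lambda>u. ln (p2 F f u)) (\<theta> (y t) - \<theta> (z t)) else 0)
                   - (if z t = k then deriv (\<lambda>u. ln (p2 F f u)) (\<theta> (y t) - \<theta> (z t)) else 0))"
    unfolding loglik_def
    by (intro DERIV_minus DERIV_sum term_deriv) (use h in auto)
  then show ?thesis unfolding neg_loglik_grad_def by (rule DERIV_imp_deriv)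
qed

theorem mainTheorem4:
  fixes n m :: nat and b B :: real and \<theta> :: "nat \<Rightarrow> real"
    and F f :: "real \<Rightarrow> real" and i j :: "nat \<Rightarrow> nat"
  assumes dens: "zero_mean_density f"
    and cdf: "cdf_of_density F f"
    and pairs: "\<forall>t\<in>{1..m}. i t \<in> {1..n} \<and> j t \<in> {1..n} \<and> i t \<noteq> j t"
    and theta: "\<forall>k\<in>{1..n}. \<theta> k \<in> {-b..b}"
    and Bpos: "B > 0"
    and Bbound: "\<forall>x\<in>{-2*b..2*b}. (\<lambda>u. ln (p2 F f u)) differentiable (at x) \<and>
                    \<bar>deriv (\<lambda>u. ln (p2 F f u)) x\<bar> \<le> B"
  shows "measure_pmf.prob (choice_pmf F f \<theta> i j m)
           {\<omega>. neg_loglik_grad_norm n F f m (chosen i j \<omega>) (other i j \<omega>) \<theta>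
                \<le> 2 * B * sqrt (real m * (ln (real n) + 2))}
         \<ge> 1 - 2 / real n"
proof -
  define g where "g = deriv (\<lambda>u. ln (p2 F f u))"
  define x where "x t = \<theta> (i t) - \<theta> (j t)" for t
  define q where "q t = p2 F f (x t)" for t
  define \<alpha> where "\<alpha> t = - g (x t)" for t
  define \<beta> where "\<beta> t = g (- x t)" for t
  define v where "v t k = (if k = i t then 1 else 0) - (if k = j t then (1::real) else 0)" for t k
  define S where "S \<omega> k = (\<Sum>t\<in>{1..m}. (if \<omega> t then \<alpha> t else \<beta> t) * v t k)" for \<omega> :: "nat \<Rightarrow> bool" and k
  define R where "R = 2 * B * sqrt (real m * (ln (real n) + 2))"
  have rng: "x t \<in> {-2*b..2*b}" "- x t \<in> {-2*b..2*b}" if "t \<in> {1..m}" for t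
    using pairs theta that unfolding x_def by (smt (verit) atLeastAtMost_iff)+
  have dif: "(\<lambda>u. ln (p2 F f u)) differentiable (at (x t))"
      "(\<lambda>u. ln (p2 F f u)) differentiable (at (- x t))"
      "\<bar>g (x t)\<bar> \<le> B" "\<bar>g (- x t)\<bar> \<le> B" if "t \<in> {1..m}" for t
    using Bbound rng[OF that] unfolding g_def by blast+
  have grad: "neg_loglik_grad F f m (chosen i j \<omega>) (other i j \<omega>) \<theta> k = S \<omega> k" for \<omega> k
  proof -
    have h: "chosen i j \<omega> t \<noteq> other i j \<omega> t \<and>
        (\<lambda>u. ln (p2 F f u)) differentiable (at (\<theta> (chosen i j \<omega> t) - \<theta> (other i j \<omega> t)))"
      if t: "t \<in> {1..m}" for t
      using bspec[OF pairs t] dif[OF t] unfolding chosen_def other_def x_def by auto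
    show ?thesis
      apply (rule trans[OF grad_formula[OF h]])
       apply assumption
      unfolding S_def sum_negf[symmetric]
      by (rule sum.cong) (auto simp: chosen_def other_def v_def \<alpha>_def \<beta>_def x_def g_def)
  qed
  have norm: "neg_loglik_grad_norm n F f m (chosen i j \<omega>) (other i j \<omega>) \<theta> = sqrt (\<Sum>k\<in>{1..n}. (S \<omega> k)\<^sup>2)" for \<omega>
    unfolding neg_loglik_grad_norm_def grad ..
  show ?thesis
  proof (cases "m = 0")
    case True
    then have "{\<omega>. neg_loglik_grad_norm n F f m (chosen i j \<omega>) (other i j \<omega>) \<theta>
                \<le> 2 * B * sqrt (real m * (ln (real n) + 2))} = UNIV"
      unfolding norm S_def by simp
    then show ?thesis by simp
  next
    case False
    then have m1: "m \<ge> 1" by simp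
    then have n1: "n \<ge> 1" using pairs by fastforce
    define lam where "lam = R / (2 * real m * B\<^sup>2)"
    note fa = final_arith[OF Bpos m1 n1, folded R_def, folded lam_def]
    have Rnn: "R \<ge> 0" unfolding R_def using Bpos n1 by simp
    have h: "0 \<le> q t \<and> q t \<le> 1 \<and> q t * \<alpha> t + (1 - q t) * \<beta> t = 0
              \<and> \<bar>\<alpha> t\<bar> \<le> B \<and> \<bar>\<beta> t\<bar> \<le> B \<and> (\<Sum>k\<in>{1..n}. (v t k)\<^sup>2) = 2" if t: "t \<in> {1..m}" for t
    proof (intro conjI)
      show "0 \<le> q t" unfolding q_def by (rule p2_nn[OF dens cdf])
      show "q t \<le> 1" unfolding q_def by (rule p2_le1[OF dens cdf])
      have "q t * g (x t) = (1 - q t) * g (- x t)"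
        unfolding q_def g_def by (rule mean_zero[OF dens cdf dif(1,2)[OF t]])
      then show "q t * \<alpha> t + (1 - q t) * \<beta> t = 0" unfolding \<alpha>_def \<beta>_def by simp
      show "\<bar>\<alpha> t\<bar> \<le> B" "\<bar>\<beta> t\<bar> \<le> B" unfolding \<alpha>_def \<beta>_def using dif(3,4)[OF t] by auto
      have ij: "i t \<in> {1..n}" "j t \<in> {1..n}" "i t \<noteq> j t" using pairs t by auto
      have "(\<Sum>k\<in>{1..n}. (v t k)\<^sup>2) = (\<Sum>k\<in>{1..n}. (if k = i t then 1 else 0) + (if k = j t then 1 else 0))"
        by (rule sum.cong) (use ij in \<open>auto simp: v_def\<close>)
      also have "\<dots> = 2" using ij by (simp add: sum.distrib)
      finally show "(\<Sum>k\<in>{1..n}. (v t k)\<^sup>2) = 2" .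
    qed
    have tb: "measure_pmf.prob (Pi_pmf {1..m} False (\<lambda>t. bernoulli_pmf (q t)))
           {\<omega>. R < sqrt (\<Sum>k\<in>{1..n}. (S \<omega> k)\<^sup>2)}
         \<le> cosh (lam * sqrt (1 / lam\<^sup>2)) * cosh (lam * B * sqrt 2) ^ card {1..m} / cosh (lam * R)"
      unfolding S_def
      by (rule tail_bound[OF _ _ _ _ h Rnn]) (use fa(1) in auto)
    have cp: "choice_pmf F f \<theta> i j m = Pi_pmf {1..m} False (\<lambda>t. bernoulli_pmf (q t))"
      unfolding choice_pmf_def q_def x_def ..
    have set_eq: "{\<omega>. neg_loglik_grad_norm n F f m (chosen i j \<omega>) (other i j \<omega>) \<theta>
                \<le> 2 * B * sqrt (real m * (ln (real n) + 2))}
        = space (measure_pmf (choice_pmf F f \<theta> i j m)) - {\<omega>. R < sqrt (\<Sum>k\<in>{1..n}. (S \<omega> k)\<^sup>2)}"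
      unfolding norm R_def by auto
    have "measure_pmf.prob (choice_pmf F f \<theta> i j m)
           {\<omega>. neg_loglik_grad_norm n F f m (chosen i j \<omega>) (other i j \<omega>) \<theta>
                \<le> 2 * B * sqrt (real m * (ln (real n) + 2))}
        = 1 - measure_pmf.prob (choice_pmf F f \<theta> i j m) {\<omega>. R < sqrt (\<Sum>k\<in>{1..n}. (S \<omega> k)\<^sup>2)}"
      unfolding set_eq by (rule measure_pmf.prob_compl) simp
    also have "\<dots> \<ge> 1 - 2 / real n"
      using tb fa(2) unfolding cp by simp
    finally show ?thesis .
  qed
qed

end
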